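(* Let $\mathcal{M}$ be a finite Markov decision process with state set $S$, action set $A$, transition function $P$, and a set of accepting states $B \subseteq S$. Let $\gamma_B:(0,1)\to(0,1)$ be a function of $\gamma$ satisfying $$\lim_{\gamma \to 1^-} \frac{1-\gamma}{1-\gamma_B(\gamma)} = 0.$$ For $\gamma\in(0,1)$ define $R_B(s) = 1-\gamma_B$ if $s\in B$ and $0$ otherwise, and $\Gamma_B(s) = \gamma_B$ if $s\in B$ and $\gamma$ otherwise (with $\gamma_B=\gamma_B(\gamma)$). For a path $\sigma$ let $$G_t(\sigma) = \sum_{i=0}^{\infty} R_B(\sigma[t+i]) \prod_{j=0}^{i-1} \Gamma_B(\sigma[t+j]),$$ with the empty product equal to $1$, and for a memoryless policy $\pi$ let $v^\gamma_\pi(s)$ be the expected value of $G_0(\sigma)$ over random paths of the Markov chain $\mathcal{M}_\pi$ induced by $\pi$ started at $s$. Let $B_\pi$ be the set of states $s\in B$ that belong to some bottom strongly connected component of $\mathcal{M}_\pi$. Then for every memoryless policy $\pi$ and every $s\in B_\pi$, $$\lim_{\gamma\to1^-} v^\gamma_\pi(s) = 1.$$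
   Context: A finite MDP consists of a finite state set $S$, a finite action set $A$, for each state $s$ a nonempty set $A(s)\subseteq A$ of enabled actions, and transition probabilities $P:S\times A\times S\to[0,1]$ with $\sum_{s'}P(s,a,s')=1$ for $a\in A(s)$. A memoryless policy is a map $\pi:S\to A$ with $\pi(s)\in A(s)$; it induces the Markov chain $\mathcal{M}_\pi$ on $S$ with transition probabilities $P_\pi(s,s')=P(s,\pi(s),s')$. A bottom strongly connected component (BSCC) of a Markov chain is a strongly connected component of its transition graph (edges where the transition probability is positive) with no outgoing transitions. *)

theory Defs
  imports "HOL-Probability.Probability"
begin

text \<open>Path measure of the Markov chain with transition kernel Q (a pmf for each state)
  started in state s, on the space of paths nat => 's, constructed by the
  Ionescu-Tulcea theorem: coordinate 0 is s, coordinate i+1 is drawn from Q (path i).\<close>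

definition mc_kernel :: "('s \<Rightarrow> 's pmf) \<Rightarrow> 's \<Rightarrow> nat \<Rightarrow> (nat \<Rightarrow> 's) \<Rightarrow> 's measure" where
  "mc_kernel Q s i x = (if i = 0 then return (count_space UNIV) s else measure_pmf (Q (x (i - 1))))"

definition mc_paths :: "('s \<Rightarrow> 's pmf) \<Rightarrow> 's \<Rightarrow> (nat \<Rightarrow> 's) measure" where
  "mc_paths Q s = projective_family.lim UNIV
      (Ionescu_Tulcea.CI (mc_kernel Q s) (\<lambda>_. count_space UNIV)) (\<lambda>_. count_space UNIV)"

definition induced_mc :: "('s \<Rightarrow> 'a \<Rightarrow> 's pmf) \<Rightarrow> ('s \<Rightarrow> 'a) \<Rightarrow> 's \<Rightarrow> 's pmf" where
  "induced_mc K pol s = K s (pol s)"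

definition mc_graph :: "('s \<Rightarrow> 's pmf) \<Rightarrow> ('s \<times> 's) set" where
  "mc_graph Q = {(s, t). pmf (Q s) t > 0}"

definition is_scc :: "('s \<times> 's) set \<Rightarrow> 's set \<Rightarrow> bool" where
  "is_scc E C \<longleftrightarrow> C \<noteq> {} \<and> (\<forall>x\<in>C. \<forall>y\<in>C. (x, y) \<in> E\<^sup>*)
     \<and> (\<forall>x\<in>C. \<forall>y. (x, y) \<in> E\<^sup>* \<and> (y, x) \<in> E\<^sup>* \<longrightarrow> y \<in> C)"

definition is_bscc :: "('s \<times> 's) set \<Rightarrow> 's set \<Rightarrow> bool" where
  "is_bscc E C \<longleftrightarrow> is_scc E C \<and> (\<forall>x\<in>C. \<forall>y. (x, y) \<in> E \<longrightarrow> y \<in> C)"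

definition B_pi :: "('s \<Rightarrow> 'a \<Rightarrow> 's pmf) \<Rightarrow> ('s \<Rightarrow> 'a) \<Rightarrow> 's set \<Rightarrow> 's set" where
  "B_pi K pol B = {s \<in> B. \<exists>C. is_bscc (mc_graph (induced_mc K pol)) C \<and> s \<in> C}"

definition R_B :: "'s set \<Rightarrow> real \<Rightarrow> 's \<Rightarrow> real" where
  "R_B B gB s = (if s \<in> B then 1 - gB else 0)"

definition Gamma_B :: "'s set \<Rightarrow> real \<Rightarrow> real \<Rightarrow> 's \<Rightarrow> real" where
  "Gamma_B B g gB s = (if s \<in> B then gB else g)"

definition G_ret :: "'s set \<Rightarrow> real \<Rightarrow> real \<Rightarrow> nat \<Rightarrow> (nat \<Rightarrow> 's) \<Rightarrow> real" where
  "G_ret B g gB t \<sigma> = (\<Sum>i. R_B B gB (\<sigma> (t + i)) * (\<Prod>j<i. Gamma_B B g gB (\<sigma> (t + j))))"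

definition value_fn :: "('s \<Rightarrow> 'a \<Rightarrow> 's pmf) \<Rightarrow> 's set \<Rightarrow> (real \<Rightarrow> real) \<Rightarrow> ('s \<Rightarrow> 'a) \<Rightarrow> real \<Rightarrow> 's \<Rightarrow> real" where
  "value_fn K B gammaB pol g s =
     (\<integral>\<sigma>. G_ret B g (gammaB g) 0 \<sigma> \<partial>mc_paths (induced_mc K pol) s)"

lemma mc_kernel_Ionescu_Tulcea:
  fixes Q :: "'s::countable \<Rightarrow> 's pmf"
  shows "Ionescu_Tulcea (mc_kernel Q s) (\<lambda>_. count_space UNIV)"
proof (rule Ionescu_Tulcea.intro)
  fix i :: nat
  show "mc_kernel Q s i \<in> measurable (PiM {0..<i} (\<lambda>_. count_space UNIV)) (subprob_algebra (count_space UNIV))"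
  proof (cases i)
    case 0
    have "(\<lambda>x. return (count_space UNIV) s) \<in> measurable (PiM {0..<i} (\<lambda>_. count_space UNIV)) (subprob_algebra (count_space UNIV))"
      by (rule measurable_const)
         (auto simp: space_subprob_algebra prob_space_imp_subprob_space prob_space_return)
    moreover have "mc_kernel Q s i = (\<lambda>x. return (count_space UNIV) s)"
      using 0 by (simp add: mc_kernel_def fun_eq_iff)
    ultimately show ?thesis by simp
  next
    case (Suc n)
    have m1: "(\<lambda>x. x n) \<in> measurable (PiM {0..<Suc n} (\<lambda>_. count_space UNIV)) (count_space UNIV)"
      by (rule measurable_component_singleton) simp
    have m2: "(\<lambda>y. measure_pmf (Q y)) \<in> measurable (count_space UNIV) (subprob_algebra (count_space UNIV))"
      by (subst measurable_count_space_eq1)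
         (auto simp: space_subprob_algebra subprob_space_measure_pmf)
    have "(\<lambda>x. measure_pmf (Q (x n))) \<in> measurable (PiM {0..<Suc n} (\<lambda>_. count_space UNIV)) (subprob_algebra (count_space UNIV))"
      using measurable_compose[OF m1 m2] by simp
    moreover have "mc_kernel Q s (Suc n) = (\<lambda>x. measure_pmf (Q (x n)))"
      by (simp add: mc_kernel_def fun_eq_iff)
    ultimately show ?thesis using Suc by simp
  qed
next
  show "prob_space (mc_kernel Q s i x)" for i x
    by (simp add: mc_kernel_def prob_space_return prob_space_measure_pmf)
qed

end

theory Submission
  imports Defs
begin

definition opr :: "('s \<Rightarrow> real) \<Rightarrow> ('s \<Rightarrow> 's pmf) \<Rightarrow> ('s \<Rightarrow> real) \<Rightarrow> 's \<Rightarrow> real" where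
  "opr Gm Q h t = Gm t * (\<Sum>u\<in>UNIV. pmf (Q t) u * h u)"

lemma opr_nonneg:
  assumes "\<And>t. 0 \<le> Gm t" "\<And>t. 0 \<le> h t"
  shows "0 \<le> opr Gm Q h t"
  unfolding opr_def using assms by (intro mult_nonneg_nonneg sum_nonneg) auto

lemma C_integral:
  fixes Q :: "'s::finite \<Rightarrow> 's pmf" and Gm :: "'s \<Rightarrow> real"
  assumes Gnn: "\<And>t. 0 \<le> Gm t"
  assumes "\<And>t. 0 \<le> g t"
  shows "(\<integral>\<^sup>+x. ennreal ((\<Prod>j<i. Gm (x j)) * g (x i))
     \<partial>Ionescu_Tulcea.C (mc_kernel Q s) (\<lambda>_. count_space UNIV) 0 (Suc i) (\<lambda>_. undefined))
     = ennreal ((opr Gm Q ^^ i) g s)"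
proof -
  interpret IT: Ionescu_Tulcea "mc_kernel Q s" "\<lambda>_. count_space UNIV"
    by (rule mc_kernel_Ionescu_Tulcea)
  let ?M = "\<lambda>_::nat. count_space (UNIV::'s set)"
  have om: "(\<lambda>_. undefined) \<in> space (PiM {0..<0} ?M)"
    by (simp add: space_PiM)
  have "\<And>h. (\<And>t. 0 \<le> h t) \<Longrightarrow> (\<integral>\<^sup>+x. ennreal ((\<Prod>j<i. Gm (x j)) * h (x i))
     \<partial>IT.C 0 (Suc i) (\<lambda>_. undefined)) = ennreal ((opr Gm Q ^^ i) h s)"
  proof (induction i)
    case (0 h)
    have "IT.C 0 (Suc 0) (\<lambda>_. undefined) = IT.eP 0 (\<lambda>_. undefined)"
      using bind_return[OF IT.measurable_eP om] by simp
    moreover have "(\<integral>\<^sup>+x. ennreal ((\<Prod>j<0. Gm (x j)) * h (x 0)) \<partial>IT.eP 0 (\<lambda>_. undefined)) = ennreal (h s)"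
      apply (subst IT.nn_integral_eP[OF om])
      apply measurable
      apply (simp add: mc_kernel_def nn_integral_return)
      done
    ultimately show ?case by simp
  next
    case (Suc i h)
    have Cs: "IT.C 0 (Suc (Suc i)) (\<lambda>_. undefined) = IT.C 0 (Suc i) (\<lambda>_. undefined) \<bind> IT.eP (Suc i)"
      by simp
    have hn: "0 \<le> opr Gm Q h t" for t by (rule opr_nonneg[OF Gnn Suc.prems])
    have "(\<integral>\<^sup>+x. ennreal ((\<Prod>j<Suc i. Gm (x j)) * h (x (Suc i))) \<partial>IT.C 0 (Suc (Suc i)) (\<lambda>_. undefined))
       = (\<integral>\<^sup>+x. (\<integral>\<^sup>+y. ennreal ((\<Prod>j<Suc i. Gm (y j)) * h (y (Suc i))) \<partial>IT.eP (Suc i) x) \<partial>IT.C 0 (Suc i) (\<lambda>_. undefined))"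
      unfolding Cs
      apply (rule nn_integral_bind[where B="PiM {0..<Suc (Suc i)} ?M"])
      subgoal by measurable
      subgoal by (subst measurable_cong_sets[OF IT.sets_C[OF om] refl]) (simp add: IT.measurable_eP)
      done
    also have "\<dots> = (\<integral>\<^sup>+x. ennreal ((\<Prod>j<i. Gm (x j)) * opr Gm Q h (x i)) \<partial>IT.C 0 (Suc i) (\<lambda>_. undefined))"
    proof (rule nn_integral_cong)
      fix x assume "x \<in> space (IT.C 0 (Suc i) (\<lambda>_. undefined))"
      then have x: "x \<in> space (PiM {0..<Suc i} ?M)" using IT.space_C[OF om, of "Suc i"] by (simp only: add_0)
      have "(\<integral>\<^sup>+y. ennreal ((\<Prod>j<Suc i. Gm (y j)) * h (y (Suc i))) \<partial>IT.eP (Suc i) x)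
          = (\<integral>\<^sup>+y. ennreal ((\<Prod>j<Suc i. Gm (x j)) * h y) \<partial>measure_pmf (Q (x i)))"
        apply (subst IT.nn_integral_eP[OF x])
        subgoal by measurable
        apply (simp add: mc_kernel_def)
        done
      also have "\<dots> = (\<Sum>y\<in>UNIV. ennreal ((\<Prod>j<Suc i. Gm (x j)) * h y) * pmf (Q (x i)) y)"
        by (rule nn_integral_measure_pmf_support) auto
      also have "\<dots> = ennreal (\<Sum>y\<in>UNIV. ((\<Prod>j<Suc i. Gm (x j)) * h y) * pmf (Q (x i)) y)"
        by (subst sum_ennreal[symmetric])
           (auto intro!: mult_nonneg_nonneg prod_nonneg Gnn Suc.prems simp: ennreal_mult'')
      also have "\<dots> = ennreal ((\<Prod>j<i. Gm (x j)) * opr Gm Q h (x i))"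
        by (simp add: opr_def sum_distrib_left algebra_simps)
      finally show "(\<integral>\<^sup>+y. ennreal ((\<Prod>j<Suc i. Gm (y j)) * h (y (Suc i))) \<partial>IT.eP (Suc i) x)
          = ennreal ((\<Prod>j<i. Gm (x j)) * opr Gm Q h (x i))" .
    qed
    also have "\<dots> = ennreal ((opr Gm Q ^^ i) (opr Gm Q h) s)"
      by (rule Suc.IH[OF hn])
    also have "\<dots> = ennreal ((opr Gm Q ^^ Suc i) h s)"
      by (simp only: funpow_Suc_right comp_def)
    finally show ?case .
  qed
  from this[OF assms(2)] show ?thesis .
qed

lemma opr_bound:
  fixes Q :: "'s::finite \<Rightarrow> 's pmf"
  assumes "\<And>t. 0 \<le> Gm t" "\<And>t. Gm t \<le> c" "\<And>t. 0 \<le> h t" "\<And>t. h t \<le> M"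
  shows "opr Gm Q h t \<le> c * M"
proof -
  have "(\<Sum>u\<in>UNIV. pmf (Q t) u * h u) \<le> (\<Sum>u\<in>UNIV. pmf (Q t) u * M)"
    by (intro sum_mono mult_left_mono) (auto simp: assms)
  also have "\<dots> = M" by (simp add: sum_distrib_right[symmetric] sum_pmf_eq_1)
  finally have a: "(\<Sum>u\<in>UNIV. pmf (Q t) u * h u) \<le> M" .
  have "0 \<le> (\<Sum>u\<in>UNIV. pmf (Q t) u * h u)" by (intro sum_nonneg) (auto simp: assms)
  then show ?thesis unfolding opr_def using a assms(1,2)[of t]
    by (meson mult_mono order_trans)
qed

lemma opr_pow_bound:
  fixes Q :: "'s::finite \<Rightarrow> 's pmf"
  assumes "\<And>t. 0 \<le> Gm t" "\<And>t. Gm t \<le> c" "\<And>t. 0 \<le> R t" "\<And>t. R t \<le> 1"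
  shows "0 \<le> (opr Gm Q ^^ i) R t \<and> (opr Gm Q ^^ i) R t \<le> c ^ i"
proof (induction i arbitrary: t)
  case 0 then show ?case using assms by simp
next
  case (Suc i)
  have "opr Gm Q ((opr Gm Q ^^ i) R) t \<le> c * c ^ i"
    by (rule opr_bound) (use assms Suc in auto)
  moreover have "0 \<le> opr Gm Q ((opr Gm Q ^^ i) R) t"
    by (rule opr_nonneg) (use assms Suc in auto)
  ultimately show ?case by simp
qed

lemma value_series:
  fixes Q :: "'s::finite \<Rightarrow> 's pmf"
  assumes Gnn: "\<And>t. 0 \<le> Gm t" and Gle: "\<And>t. Gm t \<le> c" and c1: "c < 1"
    and Rnn: "\<And>t. 0 \<le> R t" and Rle: "\<And>t. R t \<le> 1"
  shows "(\<integral>\<sigma>. (\<Sum>i. R (\<sigma> i) * (\<Prod>j<i. Gm (\<sigma> j))) \<partial>mc_paths Q s) = (\<Sum>i. (opr Gm Q ^^ i) R s)"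
proof -
  interpret IT: Ionescu_Tulcea "mc_kernel Q s" "\<lambda>_. count_space UNIV"
    by (rule mc_kernel_Ionescu_Tulcea)
  let ?M = "\<lambda>_::nat. count_space (UNIV::'s set)"
  let ?L = "mc_paths Q s"
  define f where "f i \<sigma> = R (\<sigma> i) * (\<Prod>j<i. Gm (\<sigma> j))" for i and \<sigma> :: "nat \<Rightarrow> 's"
  define a where "a i = (opr Gm Q ^^ i) R s" for i
  have L: "?L = IT.PF.lim" by (simp add: mc_paths_def)
  have c0: "0 \<le> c" using Gnn Gle order_trans by blast
  have om: "(\<lambda>_. undefined) \<in> space (PiM {0..<0} ?M)"
    by (simp add: space_PiM)
  have fnn: "0 \<le> f i \<sigma>" for i \<sigma>
    unfolding f_def by (intro mult_nonneg_nonneg prod_nonneg Rnn Gnn)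
  have fle: "f i \<sigma> \<le> c ^ i" for i \<sigma>
  proof -
    have "(\<Prod>j<i. Gm (\<sigma> j)) \<le> (\<Prod>j<i. c)" by (intro prod_mono) (auto simp: Gnn Gle)
    then have "(\<Prod>j<i. Gm (\<sigma> j)) \<le> c ^ i" by simp
    moreover have "0 \<le> (\<Prod>j<i. Gm (\<sigma> j))" by (intro prod_nonneg) (auto simp: Gnn)
    ultimately show ?thesis unfolding f_def using Rnn[of "\<sigma> i"] Rle[of "\<sigma> i"]
      by (meson mult_left_le_one_le order_trans)
  qed
  have sf: "summable (\<lambda>i. f i \<sigma>)" for \<sigma>
    by (rule summable_comparison_test'[where g="\<lambda>i. c ^ i"]) (use fnn fle c0 c1 in auto)
  have ann: "0 \<le> a i" and ale: "a i \<le> c ^ i" for i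
    unfolding a_def using opr_pow_bound[where Gm=Gm and c=c and R=R and Q=Q and i=i and t=s] Gnn Gle Rnn Rle by auto
  have sa: "summable a"
    by (rule summable_comparison_test'[where g="\<lambda>i. c ^ i"]) (use ann ale c0 c1 in auto)
  have fmeas[measurable]: "f i \<in> borel_measurable (PiM UNIV ?M)" for i
    unfolding f_def by measurable
  have fmeasL[measurable]: "f i \<in> borel_measurable ?L" for i
    using fmeas by (simp add: L measurable_cong_sets[OF IT.PF.sets_lim refl])
  have key: "(\<integral>\<^sup>+\<sigma>. ennreal (f i \<sigma>) \<partial>?L) = ennreal (a i)" for i
  proof -
    define J where "J = {0..<Suc i}"
    have upto: "IT.up_to J = Suc i"
    proof (rule antisym)
      show "IT.up_to J \<le> Suc i" unfolding J_def by (subst IT.up_to_iff_Ico) auto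
      show "Suc i \<le> IT.up_to J"
      proof (rule ccontr)
        assume "\<not> Suc i \<le> IT.up_to J"
        then have "IT.up_to J \<le> i" by simp
        then have "J \<subseteq> {0..<i}" unfolding J_def by (subst (asm) IT.up_to_iff_Ico) auto
        then show False unfolding J_def by auto
      qed
    qed
    have rJ: "f i (restrict \<sigma> J) = f i \<sigma>" for \<sigma>
      unfolding f_def J_def by (auto intro!: arg_cong2[where f=times] prod.cong)
    have fmJ[measurable]: "f i \<in> borel_measurable (PiM J ?M)"
      unfolding f_def J_def by measurable
    have mr: "(\<lambda>\<sigma>. restrict \<sigma> J) \<in> measurable ?L (PiM J ?M)"
      by (simp add: L measurable_cong_sets[OF IT.PF.sets_lim refl] measurable_restrict_subset)
    have mr2: "(\<lambda>\<sigma>. restrict \<sigma> J) \<in> measurable (IT.C 0 (Suc i) (\<lambda>_. undefined)) (PiM J ?M)"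
      by (subst measurable_cong_sets[OF IT.sets_C[OF om] refl]) (simp add: J_def measurable_restrict_subset)
    have "(\<integral>\<^sup>+\<sigma>. ennreal (f i \<sigma>) \<partial>?L) = (\<integral>\<^sup>+\<sigma>. ennreal (f i (restrict \<sigma> J)) \<partial>?L)"
      by (simp add: rJ)
    also have "\<dots> = (\<integral>\<^sup>+x. ennreal (f i x) \<partial>distr ?L (PiM J ?M) (\<lambda>\<sigma>. restrict \<sigma> J))"
      by (rule nn_integral_distr[symmetric, OF mr]) simp
    also have "\<dots> = (\<integral>\<^sup>+x. ennreal (f i x) \<partial>IT.CI J)"
      by (simp add: L J_def IT.distr_lim)
    also have "\<dots> = (\<integral>\<^sup>+x. ennreal (f i (restrict x J)) \<partial>IT.C 0 (Suc i) (\<lambda>_. undefined))"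
      unfolding IT.CI_def upto by (rule nn_integral_distr[OF mr2]) simp
    also have "\<dots> = (\<integral>\<^sup>+x. ennreal ((\<Prod>j<i. Gm (x j)) * R (x i)) \<partial>IT.C 0 (Suc i) (\<lambda>_. undefined))"
      by (simp only: rJ) (simp add: f_def mult.commute)
    also have "\<dots> = ennreal (a i)"
      unfolding a_def by (rule C_integral[OF Gnn Rnn])
    finally show ?thesis .
  qed
  have "(\<integral>\<sigma>. (\<Sum>i. f i \<sigma>) \<partial>?L) = enn2real (\<integral>\<^sup>+\<sigma>. ennreal (\<Sum>i. f i \<sigma>) \<partial>?L)"
    by (rule integral_eq_nn_integral) (auto intro!: suminf_nonneg sf fnn)
  also have "\<dots> = enn2real (\<integral>\<^sup>+\<sigma>. (\<Sum>i. ennreal (f i \<sigma>)) \<partial>?L)"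
    by (simp add: suminf_ennreal2[OF fnn sf])
  also have "\<dots> = enn2real (\<Sum>i. (\<integral>\<^sup>+\<sigma>. ennreal (f i \<sigma>) \<partial>?L))"
    by (subst nn_integral_suminf) auto
  also have "\<dots> = enn2real (\<Sum>i. ennreal (a i))" by (simp add: key)
  also have "\<dots> = (\<Sum>i. a i)" by (simp add: suminf_ennreal2[OF ann sa] suminf_nonneg[OF sa ann])
  finally show ?thesis unfolding f_def a_def .
qed


lemma bellman:
  fixes Q :: "'s::finite \<Rightarrow> 's pmf"
  assumes Gnn: "\<And>t. 0 \<le> Gm t" and Gle: "\<And>t. Gm t \<le> c" and c1: "c < 1"
    and Rnn: "\<And>t. 0 \<le> R t" and Rle: "\<And>t. R t \<le> 1"
  shows "(\<Sum>i. (opr Gm Q ^^ i) R t) = R t + Gm t * (\<Sum>u\<in>UNIV. pmf (Q t) u * (\<Sum>i. (opr Gm Q ^^ i) R u))"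
proof -
  define a where "a i u = (opr Gm Q ^^ i) R u" for i u
  have c0: "0 \<le> c" using Gnn Gle order_trans by blast
  have ann: "0 \<le> a i u" and ale: "a i u \<le> c ^ i" for i u
    unfolding a_def using opr_pow_bound[where Gm=Gm and c=c and R=R and Q=Q and i=i and t=u] Gnn Gle Rnn Rle by auto
  have sa: "summable (\<lambda>i. a i u)" for u
    by (rule summable_comparison_test'[where g="\<lambda>i. c ^ i"]) (use ann ale c0 c1 in auto)
  have aS: "a (Suc i) t = Gm t * (\<Sum>u\<in>UNIV. pmf (Q t) u * a i u)" for i
    by (simp add: a_def opr_def)
  have s1: "summable (\<lambda>i. \<Sum>u\<in>UNIV. pmf (Q t) u * a i u)"
    by (intro summable_sum summable_mult sa)
  have "(\<Sum>i. a i t) = a 0 t + (\<Sum>i. a (Suc i) t)"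
    using suminf_split_head[OF sa[of t]] by simp
  also have "(\<Sum>i. a (Suc i) t) = Gm t * (\<Sum>i. \<Sum>u\<in>UNIV. pmf (Q t) u * a i u)"
    unfolding aS by (rule suminf_mult[OF s1])
  also have "(\<Sum>i. \<Sum>u\<in>UNIV. pmf (Q t) u * a i u) = (\<Sum>u\<in>UNIV. \<Sum>i. pmf (Q t) u * a i u)"
    by (rule suminf_sum) (intro summable_mult sa)
  also have "\<dots> = (\<Sum>u\<in>UNIV. pmf (Q t) u * (\<Sum>i. a i u))"
    by (intro sum.cong refl suminf_mult sa)
  finally show ?thesis unfolding a_def by simp
qed

lemma fixpoint_le_1:
  fixes Q :: "'s::finite \<Rightarrow> 's pmf" and v :: "'s \<Rightarrow> real"
  assumes bell: "\<And>t. v t = R t + Gm t * (\<Sum>u\<in>UNIV. pmf (Q t) u * v u)"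
    and Gnn: "\<And>t. 0 \<le> Gm t" and G1: "\<And>t. Gm t < 1" and RG: "\<And>t. R t + Gm t \<le> 1"
  shows "v t \<le> 1"
proof (rule ccontr)
  assume "\<not> v t \<le> 1"
  define m where "m = Max (range v)"
  have vm: "v u \<le> m" for u unfolding m_def by (rule Max_ge) auto
  obtain t0 where t0: "v t0 = m"
  proof -
    have "m \<in> range v" unfolding m_def by (rule Max_in) auto
    then show ?thesis using that by auto
  qed
  have m1: "m > 1" using vm[of t] \<open>\<not> v t \<le> 1\<close> by linarith
  have "(\<Sum>u\<in>UNIV. pmf (Q t0) u * v u) \<le> (\<Sum>u\<in>UNIV. pmf (Q t0) u * m)"
    by (intro sum_mono mult_left_mono vm) auto
  also have "\<dots> = m" by (simp add: sum_distrib_right[symmetric] sum_pmf_eq_1)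
  finally have "v t0 \<le> R t0 + Gm t0 * m"
    using bell[of t0] Gnn[of t0] by (metis add_left_mono mult_left_mono)
  also have "\<dots> \<le> (1 - Gm t0) + Gm t0 * m" using RG[of t0] by linarith
  also have "\<dots> < m"
  proof -
    have "(1 - Gm t0) * 1 < (1 - Gm t0) * m" using G1[of t0] m1 by (intro mult_strict_left_mono) auto
    then show ?thesis by (simp add: algebra_simps)
  qed
  finally show False using t0 by simp
qed


lemma core:
  fixes Q :: "'s::finite \<Rightarrow> 's pmf" and v :: "'s \<Rightarrow> real"
  assumes bell: "\<And>t. v t = R_B B gB t + Gamma_B B g gB t * (\<Sum>u\<in>UNIV. pmf (Q t) u * v u)"
    and v1: "\<And>t. v t \<le> 1"
    and g: "0 < g" "g < 1" and gB: "0 < gB" "gB < 1"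
    and closed: "\<And>t u. t \<in> C \<Longrightarrow> pmf (Q t) u > 0 \<Longrightarrow> u \<in> C"
    and sC: "s \<in> C" "s \<in> B"
    and reach: "\<And>t. t \<in> C \<Longrightarrow> \<exists>k\<le>K. (t, s) \<in> (mc_graph Q) ^^ k"
    and q: "0 < q" "q \<le> 1" "\<And>t u. pmf (Q t) u > 0 \<Longrightarrow> q \<le> pmf (Q t) u"
  shows "1 - v s \<le> real K * (1 - g) / (q ^ K * (1 - gB))"
proof -
  define w where "w t = 1 - v t" for t
  define \<epsilon> where "\<epsilon> = 1 - g"
  define \<eta> where "\<eta> = 1 - gB"
  have eps0: "0 \<le> \<epsilon>" using g by (simp add: \<epsilon>_def)
  have eta0: "0 < \<eta>" using gB by (simp add: \<eta>_def)
  have w0: "0 \<le> w t" for t using v1[of t] by (simp add: w_def)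
  have sw: "(\<Sum>u\<in>UNIV. pmf (Q t) u * w u) = 1 - (\<Sum>u\<in>UNIV. pmf (Q t) u * v u)" for t
    by (simp add: w_def right_diff_distrib sum_subtractf sum_pmf_eq_1)
  have weqB: "w t = gB * (\<Sum>u\<in>UNIV. pmf (Q t) u * w u)" if "t \<in> B" for t
    using bell[of t] that unfolding sw by (simp add: w_def R_B_def Gamma_B_def algebra_simps)
  have weqN: "w t = \<epsilon> + g * (\<Sum>u\<in>UNIV. pmf (Q t) u * w u)" if "t \<notin> B" for t
    using bell[of t] that unfolding sw by (simp add: w_def R_B_def Gamma_B_def \<epsilon>_def algebra_simps)
  have finC: "finite C" by simp
  define M where "M = Max (w ` C)"
  have wM: "w u \<le> M" if "u \<in> C" for u unfolding M_def using that by (intro Max_ge) auto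
  have M0: "0 \<le> M" using wM[OF sC(1)] w0[of s] by linarith
  obtain ts where ts: "ts \<in> C" "w ts = M"
  proof -
    have "M \<in> w ` C" unfolding M_def using sC by (intro Max_in) auto
    then show ?thesis using that by auto
  qed
  have sumM: "(\<Sum>u\<in>UNIV. pmf (Q t) u * w u) \<le> M - pmf (Q t) u0 * (M - w u0)" if "t \<in> C" for t u0
  proof -
    have nn: "0 \<le> pmf (Q t) u * (M - w u)" for u
    proof (cases "pmf (Q t) u > 0")
      case True then have "u \<in> C" using closed that by blast
      then show ?thesis using wM by (simp add: True less_imp_le)
    next
      case False then have "pmf (Q t) u = 0" using pmf_nonneg[of "Q t" u] by linarith
      then show ?thesis by simp
    qed
    have "pmf (Q t) u0 * (M - w u0) \<le> (\<Sum>u\<in>UNIV. pmf (Q t) u * (M - w u))"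
      by (rule member_le_sum) (auto simp: nn)
    moreover have "(\<Sum>u\<in>UNIV. pmf (Q t) u * (M - w u)) = M - (\<Sum>u\<in>UNIV. pmf (Q t) u * w u)"
      by (simp add: right_diff_distrib sum_subtractf sum_distrib_right[symmetric] sum_pmf_eq_1)
    ultimately show ?thesis by linarith
  qed
  have sumM': "(\<Sum>u\<in>UNIV. pmf (Q t) u * w u) \<le> M" if "t \<in> C" for t
    using sumM[OF that, of t] wM[OF that] by (smt (verit) pmf_nonneg mult_nonneg_nonneg)
  have sum0: "0 \<le> (\<Sum>u\<in>UNIV. pmf (Q t) u * w u)" for t
    by (intro sum_nonneg mult_nonneg_nonneg w0) auto
  have claim: "\<forall>t. t \<in> C \<longrightarrow> (t, s) \<in> (mc_graph Q) ^^ k \<longrightarrow> w t \<le> M + real k * \<epsilon> - q ^ k * \<eta> * M" for k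
  proof (induction k)
    case 0
    show ?case
    proof (intro allI impI)
      fix t assume "t \<in> C" "(t, s) \<in> mc_graph Q ^^ 0"
      then have t: "t = s" by simp
      have "w s \<le> gB * M" using weqB[OF sC(2)] sumM'[OF sC(1)] gB
        by (metis less_imp_le mult_left_mono)
      then show "w t \<le> M + real 0 * \<epsilon> - q ^ 0 * \<eta> * M" by (simp add: t \<eta>_def algebra_simps)
    qed
  next
    case (Suc k)
    show ?case
    proof (intro allI impI)
      fix t assume tC: "t \<in> C" and ts: "(t, s) \<in> mc_graph Q ^^ Suc k"
      obtain u where tu: "(t, u) \<in> mc_graph Q" and us: "(u, s) \<in> mc_graph Q ^^ k"
        using relpow_Suc_D2[OF ts] by blast
      have p: "pmf (Q t) u > 0" using tu by (simp add: mc_graph_def)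
      have uC: "u \<in> C" using closed[OF tC p] .
      have IH: "w u \<le> M + real k * \<epsilon> - q ^ k * \<eta> * M" using Suc uC us by blast
      have qk1: "q ^ Suc k \<le> 1" using q(1,2) by (intro power_le_one) auto
      have qk0: "0 \<le> q ^ Suc k" using q by simp
      show "w t \<le> M + real (Suc k) * \<epsilon> - q ^ Suc k * \<eta> * M"
      proof (cases "t \<in> B")
        case True
        have "w t \<le> gB * M" using weqB[OF True] sumM'[OF tC] gB
          by (metis less_imp_le mult_left_mono)
        moreover have "q ^ Suc k * (\<eta> * M) \<le> 1 * (\<eta> * M)"
          using qk1 eta0 M0 by (intro mult_right_mono) auto
        moreover have "0 \<le> real k * \<epsilon>" using eps0 by simp
        moreover have "gB * M = M - \<eta> * M" by (simp add: \<eta>_def algebra_simps)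
        moreover have "M + real (Suc k) * \<epsilon> - q ^ Suc k * \<eta> * M
            = (M - q ^ Suc k * (\<eta> * M)) + real k * \<epsilon> + \<epsilon>" by (simp add: algebra_simps)
        ultimately show ?thesis using eps0 by linarith
      next
        case False
        define p where "p = pmf (Q t) u"
        have pq: "q \<le> p" using q(3)[OF p] by (simp add: p_def)
        have d0: "0 \<le> M - w u" using wM[OF uC] by simp
        have h1: "w t \<le> \<epsilon> + (\<Sum>u\<in>UNIV. pmf (Q t) u * w u)"
          using weqN[OF False] sum0[of t] g by (smt (verit) mult_left_le_one_le)
        have h2: "(\<Sum>u\<in>UNIV. pmf (Q t) u * w u) \<le> M - p * (M - w u)" using sumM[OF tC, of u] by (simp add: p_def)
        have h3: "p * (M - w u) \<ge> q * (M - w u)" using pq d0 by (intro mult_right_mono) auto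
        have h4: "q * (M - w u) \<ge> q * (q ^ k * \<eta> * M - real k * \<epsilon>)"
          using IH q by (intro mult_left_mono) auto
        have h5: "q * (real k * \<epsilon>) \<le> 1 * (real k * \<epsilon>)"
          using q eps0 by (intro mult_right_mono) auto
        have h6: "q * (q ^ k * \<eta> * M - real k * \<epsilon>) = q ^ Suc k * \<eta> * M - q * (real k * \<epsilon>)"
          by (simp add: algebra_simps)
        have h7: "real (Suc k) * \<epsilon> = real k * \<epsilon> + \<epsilon>" by (simp add: algebra_simps)
        show ?thesis using h1 h2 h3 h4 h5 h6 h7 by linarith
      qed
    qed
  qed
  obtain k where k: "k \<le> K" "(ts, s) \<in> mc_graph Q ^^ k" using reach[OF ts(1)] by blast
  have "M \<le> M + real k * \<epsilon> - q ^ k * \<eta> * M" using claim[of k] ts k by auto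
  then have a: "q ^ k * \<eta> * M \<le> real k * \<epsilon>" by simp
  have "q ^ K \<le> q ^ k" using q k by (intro power_decreasing) auto
  then have "q ^ K * \<eta> * M \<le> q ^ k * \<eta> * M" using eta0 M0 by (intro mult_right_mono) auto
  also have "\<dots> \<le> real K * \<epsilon>" using a k eps0 by (meson of_nat_le_iff mult_right_mono order_trans)
  finally have "M * (q ^ K * \<eta>) \<le> real K * \<epsilon>" by (simp add: algebra_simps)
  then have "M \<le> real K * \<epsilon> / (q ^ K * \<eta>)" using q eta0 by (simp add: pos_le_divide_eq)
  moreover have "w s \<le> M" using wM[OF sC(1)] .
  ultimately show ?thesis by (simp add: w_def \<epsilon>_def \<eta>_def)
qed


theorem lemma3:
  fixes K :: "'s::finite \<Rightarrow> 'a::finite \<Rightarrow> 's pmf"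
    and enabled :: "'s \<Rightarrow> 'a set"
    and B :: "'s set"
    and gammaB :: "real \<Rightarrow> real"
    and pol :: "'s \<Rightarrow> 'a"
    and s :: 's
  assumes enabled_nonempty: "\<And>t. enabled t \<noteq> {}"
    and gammaB_range: "\<And>g. 0 < g \<Longrightarrow> g < 1 \<Longrightarrow> 0 < gammaB g \<and> gammaB g < 1"
    and gammaB_lim: "((\<lambda>g. (1 - g) / (1 - gammaB g)) \<longlongrightarrow> 0) (at_left 1)"
    and pi_policy: "\<And>t. pol t \<in> enabled t"
    and s_in: "s \<in> B_pi K pol B"
  shows "((\<lambda>g. value_fn K B gammaB pol g s) \<longlongrightarrow> 1) (at_left 1)"
proof -
  define Q where "Q = induced_mc K pol"
  define E where "E = mc_graph Q"
  have sB: "s \<in> B" using s_in by (simp add: B_pi_def)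
  have "\<exists>C. is_bscc E C \<and> s \<in> C"
    using s_in unfolding B_pi_def E_def Q_def by simp
  then obtain C where bscc: "is_bscc E C" and sC: "s \<in> C" by blast
  have closed: "u \<in> C" if "t \<in> C" "pmf (Q t) u > 0" for t u
  proof -
    have "(t, u) \<in> E" using that(2) by (simp add: E_def mc_graph_def)
    then show ?thesis using bscc that(1) unfolding is_bscc_def by blast
  qed
  have finE: "finite E" by simp
  define KK where "KK = card E"
  have reach: "\<exists>k\<le>KK. (t, s) \<in> (mc_graph Q) ^^ k" if "t \<in> C" for t
  proof -
    have "(t, s) \<in> E\<^sup>*" using bscc that sC unfolding is_bscc_def is_scc_def by blast
    then obtain k where "k \<le> KK" "(t, s) \<in> E ^^ k"
      using rtrancl_finite_eq_relpow[OF finE] unfolding KK_def by blast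
    then show ?thesis unfolding E_def by blast
  qed
  define q where "q = Min (insert 1 ((\<lambda>(t, u). pmf (Q t) u) ` E))"
  have q0: "0 < q" unfolding q_def using finE by (subst Min_gr_iff) (auto simp: E_def mc_graph_def)
  have q1: "q \<le> 1" unfolding q_def using finE by (intro Min_le) auto
  have qle: "q \<le> pmf (Q t) u" if "pmf (Q t) u > 0" for t u
    unfolding q_def using finE that by (intro Min_le) (auto simp: E_def mc_graph_def image_iff)
  define h where "h g = 1 - value_fn K B gammaB pol g s" for g
  have bounds: "0 \<le> h g \<and> h g \<le> real KK / q ^ KK * ((1 - g) / (1 - gammaB g))" if g: "0 < g" "g < 1" for g
  proof -
    define gB where "gB = gammaB g"
    have gB: "0 < gB" "gB < 1" using gammaB_range[OF g] by (auto simp: gB_def)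
    define Gm where "Gm = Gamma_B B g gB"
    define R where "R = R_B B gB"
    define c where "c = max g gB"
    have Gnn: "0 \<le> Gm t" for t using g gB by (simp add: Gm_def Gamma_B_def)
    have Gle: "Gm t \<le> c" for t by (simp add: Gm_def Gamma_B_def c_def)
    have c1: "c < 1" using g gB by (simp add: c_def)
    have Rnn: "0 \<le> R t" for t using gB by (simp add: R_def R_B_def)
    have Rle: "R t \<le> 1" for t using gB by (simp add: R_def R_B_def)
    define v where "v t = (\<Sum>i. (opr Gm Q ^^ i) R t)" for t
    have val: "value_fn K B gammaB pol g s = v s"
      unfolding value_fn_def v_def G_ret_def
      using value_series[OF Gnn Gle c1 Rnn Rle, of Q s]
      by (simp add: Q_def Gm_def R_def gB_def)
    have bell: "v t = R t + Gm t * (\<Sum>u\<in>UNIV. pmf (Q t) u * v u)" for t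
      unfolding v_def by (rule bellman[OF Gnn Gle c1 Rnn Rle])
    have v1: "v t \<le> 1" for t
      by (rule fixpoint_le_1[OF bell Gnn]) (use g gB in \<open>auto simp: Gm_def R_def Gamma_B_def R_B_def\<close>)
    have "1 - v s \<le> real KK * (1 - g) / (q ^ KK * (1 - gB))"
      by (rule core[OF bell[unfolded Gm_def R_def] v1 g gB closed sC sB reach q0 q1 qle])
    then show ?thesis using v1[of s] by (simp add: h_def val gB_def)
  qed
  have ev: "eventually (\<lambda>g. 0 < g \<and> g < 1) (at_left (1::real))"
    using eventually_at_left_real[of 0 1] by (auto elim!: eventually_mono)
  have "(h \<longlongrightarrow> 0) (at_left 1)"
  proof (rule tendsto_sandwich[where f="\<lambda>_. 0" and h="\<lambda>g. real KK / q ^ KK * ((1 - g) / (1 - gammaB g))"])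
    show "\<forall>\<^sub>F g in at_left 1. 0 \<le> h g"
      using ev by (rule eventually_mono) (use bounds in presburger)
    show "\<forall>\<^sub>F g in at_left 1. h g \<le> real KK / q ^ KK * ((1 - g) / (1 - gammaB g))"
      using ev by (rule eventually_mono) (use bounds in presburger)
    show "((\<lambda>g. real KK / q ^ KK * ((1 - g) / (1 - gammaB g))) \<longlongrightarrow> 0) (at_left 1)"
      by (rule tendsto_mult_right_zero[OF gammaB_lim])
  qed simp
  then have "((\<lambda>g. 1 - h g) \<longlongrightarrow> 1 - 0) (at_left 1)" by (intro tendsto_diff tendsto_const)
  then show ?thesis by (simp add: h_def)
qed

end
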